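(* Let $p$ be a prime and work in $F\otimes_{ku_*}ku_*(\mathbb{Z}_{p^2})$ with the notation of the context. Then for all integers $a,b$ and every integer $k\ge2$, $$ \begin{aligned} p^{k+1}[a,b] ={}& (-1)^k u_1^k\, p\, v^{kg_1}[a,b-kg_1] + (-1)^k u_1^{k-1} v^{(k-1)g_1+g_2}[a,b-(k-1)g_1-g_2]\\ &+\sum_{t=1}^{\lfloor k/2\rfloor}\Big( c_{k+1}(t)(-1)^{k+t}u_1^{k-2t}\,p\, v^{(k-2t)g_1+tg_2}[a,b-(k-2t)g_1-tg_2]\\ &\qquad\qquad + d_{k+1}(t)(-1)^{k+t}u_1^{k-2t-1} v^{(k-2t-1)g_1}v^{(t+1)g_2}[a,b-(k-2t-1)g_1-(t+1)g_2]\Big)\\ &+\Sigma_1+\Sigma_2+\Sigma_3, \end{aligned} $$ where $$\Sigma_1=\sum_{t=0}^{k-1}c_t\,p^{k-t-1}v^{tg_1}(A+B)^{[a,b-tg_1]},\qquad \Sigma_2=\sum_{t=1}^{\lfloor (k-1)/2\rfloor}c'_t\,p^{k-2t-1}v^{tg_2}(A+B)^{[a,b-tg_2]},$$ $$\Sigma_3=\sum_{r=1}^{\lfloor (k-2)/2\rfloor}\ \sum_{t=1}^{k-1-2r}c_{r,t}\,p^{k-2r-t-1}v^{rg_2+tg_1}(A+B)^{[a,b-rg_2-tg_1]}.$$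
   Context: Fix a prime $p$. Let $ku_*=\mathbb{Z}_{(p)}[v]$ ($p$-local connective $K$-theory coefficients, $v$ in degree 2). Put $g_1=p-1$, $g_2=p^2-1$. For $m\ge1$, $0\le t\le p^m-1$, let $a_{t,m}=\binom{p^m}{t+1}v^t$. The reduced $ku_*(\mathbb{Z}_{p^2})$ is the $ku_*$-module generated by $e_j$ ($j\ge1$) with relations $\sum_{t=0}^{p^2-1}a_{t,2}e_{j-t}=0$ for all $j\ge1$, $e_h=0$ for $h\le0$. Let $F$ be the free $ku_*$-module on $\alpha_i$, $i\ge1$ ($\alpha_h=0$ for $h\le0$), and $[i,j]=\alpha_i\otimes e_j\in F\otimes_{ku_*}ku_*(\mathbb{Z}_{p^2})$ (zero if $i\le0$ or $j\le0$). Define the unit $u_1\in\mathbb{Z}_{(p)}^\times$ by $\binom{p^2}{p}=u_1p$, so $a_{g_1,2}=u_1pv^{g_1}$. Convention: $v^s=0$ for $s<0$ (so e.g. $v^{(k-2t-1)g_1}v^{(t+1)g_2}=0$ if $k-2t-1<0$). For integers $a,b$ set $A^{[a,b]}=\sum_{i=1}^{p-2}\binom{p^2}{i+1}v^i[a,b-i]$, $B^{[a,b]}=\sum_{i=p}^{p^2-2}\binom{p^2}{i+1}v^i[a,b-i]$, $(A+B)^{[a,b]}=A^{[a,b]}+B^{[a,b]}$. Integers $c_k(t),d_k(t)$: $c_k(0)=d_k(0)=1$ for $k\ge2$; $c_2(t)=d_2(t)=0$ for $t\ge1$; for $k\ge3$, $t\ge1$: $c_k(t)=d_{k-1}(t-1)+c_{k-1}(t)$,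 $d_k(t)=c_{k-1}(t)$; and $c_k(t)=d_k(t)=0$ if $t<0$ or $k<2$. Finally $c_t=(-1)^{t+1}u_1^t$, $c'_t=(-1)^{t+1}c_{2t+1}(t)$, $c_{r,t}=(-1)^{t+r+1}u_1^t c_{t+2r+1}(r)$. $\lfloor\cdot\rfloor$ is the integer part. *)

theory Defs
  imports Complex_Main "HOL-Computational_Algebra.Polynomial" "HOL-Computational_Algebra.Primes"
begin

text \<open>Ground ring ku_* = Z_(p)[v], realised inside rat poly (v = the polynomial variable).
  Elements of the free ku_*-module on the symbols [i,j] (i,j >= 1) are functions
  int * int => rat poly (coefficient of [i,j]); F (x) ku_*(Z_{p^2}) is this free module
  modulo the ku_*-submodule spanned by the relations alpha_i (x) R_j.\<close>

type_synonym elt = "int \<times> int \<Rightarrow> rat poly"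

definition zploc :: "nat \<Rightarrow> rat \<Rightarrow> bool" where
  "zploc p r \<longleftrightarrow> (\<exists>m n :: int. n \<noteq> 0 \<and> \<not> (int p dvd n) \<and> r = of_int m / of_int n)"

definition zploc_poly :: "nat \<Rightarrow> rat poly \<Rightarrow> bool" where
  "zploc_poly p c \<longleftrightarrow> (\<forall>n. zploc p (coeff c n))"

definition vp :: "int \<Rightarrow> rat poly" where
  "vp s = (if s < 0 then 0 else monom 1 (nat s))"

definition cst :: "rat \<Rightarrow> rat poly" where
  "cst r = [:r:]"

text \<open>the symbol [i,j] = alpha_i (x) e_j, zero if i <= 0 or j <= 0\<close>
definition br :: "int \<Rightarrow> int \<Rightarrow> elt" where
  "br i j = (\<lambda>q. if q = (i, j) \<and> i \<ge> 1 \<and> j \<ge> 1 then 1 else 0)"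

definition sc :: "rat poly \<Rightarrow> elt \<Rightarrow> elt" where
  "sc c x = (\<lambda>q. c * x q)"

definition eadd :: "elt \<Rightarrow> elt \<Rightarrow> elt" where
  "eadd x y = (\<lambda>q. x q + y q)"

definition esum :: "('i \<Rightarrow> elt) \<Rightarrow> 'i set \<Rightarrow> elt" where
  "esum f I = (\<lambda>q. \<Sum>i\<in>I. f i q)"

definition acoef :: "nat \<Rightarrow> int \<Rightarrow> nat \<Rightarrow> rat poly" where
  "acoef p t m = cst (of_nat (p ^ m choose nat (t + 1))) * vp t"

definition rel :: "nat \<Rightarrow> int \<Rightarrow> int \<Rightarrow> elt" where
  "rel p i j = esum (\<lambda>t. sc (acoef p t 2) (br i (j - t))) {0 .. int (p ^ 2) - 1}"

inductive_set relspan :: "nat \<Rightarrow> elt set" for p :: nat where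
  zero: "(\<lambda>q. 0) \<in> relspan p"
| step: "x \<in> relspan p \<Longrightarrow> zploc_poly p c \<Longrightarrow> i \<ge> 1 \<Longrightarrow> j \<ge> 1
          \<Longrightarrow> (\<lambda>q. x q + c * rel p i j q) \<in> relspan p"

definition ku_eq :: "nat \<Rightarrow> elt \<Rightarrow> elt \<Rightarrow> bool" where
  "ku_eq p x y \<longleftrightarrow> (\<lambda>q. x q - y q) \<in> relspan p"

definition g1 :: "nat \<Rightarrow> int" where "g1 p = int p - 1"
definition g2 :: "nat \<Rightarrow> int" where "g2 p = int p ^ 2 - 1"

definition u1 :: "nat \<Rightarrow> rat" where
  "u1 p = of_nat (p ^ 2 choose p) / of_nat p"

definition Aterm :: "nat \<Rightarrow> int \<Rightarrow> int \<Rightarrow> elt" where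
  "Aterm p a b = esum (\<lambda>i. sc (cst (of_nat (p ^ 2 choose nat (i + 1))) * vp i) (br a (b - i)))
                      {1 .. int p - 2}"

definition Bterm :: "nat \<Rightarrow> int \<Rightarrow> int \<Rightarrow> elt" where
  "Bterm p a b = esum (\<lambda>i. sc (cst (of_nat (p ^ 2 choose nat (i + 1))) * vp i) (br a (b - i)))
                      {int p .. int p ^ 2 - 2}"

definition AB :: "nat \<Rightarrow> int \<Rightarrow> int \<Rightarrow> elt" where
  "AB p a b = eadd (Aterm p a b) (Bterm p a b)"

fun cc :: "nat \<Rightarrow> int \<Rightarrow> int" and dd :: "nat \<Rightarrow> int \<Rightarrow> int" where
  "cc 0 t = 0"
| "cc (Suc 0) t = 0"
| "cc (Suc (Suc 0)) t = (if t = 0 then 1 else 0)"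
| "cc (Suc (Suc (Suc k))) t =
     (if t < 0 then 0 else if t = 0 then 1 else dd (Suc (Suc k)) (t - 1) + cc (Suc (Suc k)) t)"
| "dd 0 t = 0"
| "dd (Suc 0) t = 0"
| "dd (Suc (Suc 0)) t = (if t = 0 then 1 else 0)"
| "dd (Suc (Suc (Suc k))) t =
     (if t < 0 then 0 else if t = 0 then 1 else cc (Suc (Suc k)) t)"

definition cT :: "nat \<Rightarrow> int \<Rightarrow> rat" where
  "cT p t = (-1) powi (t + 1) * u1 p powi t"

definition cP :: "int \<Rightarrow> rat" where
  "cP t = (-1) powi (t + 1) * of_int (cc (nat (2 * t + 1)) t)"

definition cRT :: "nat \<Rightarrow> int \<Rightarrow> int \<Rightarrow> rat" where
  "cRT p r t = (-1) powi (t + r + 1) * u1 p powi t * of_int (cc (nat (t + 2 * r + 1)) r)"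

end

theory Submission
  imports Defs
begin


lemma cc_neg: "t < 0 \<Longrightarrow> cc n t = 0" and dd_neg: "t < 0 \<Longrightarrow> dd n t = 0"
proof -
  have "\<And>t. t < 0 \<Longrightarrow> cc n t = 0 \<and> dd n t = 0"
  proof -
    fix t :: int assume "t < 0"
    then show "cc n t = 0 \<and> dd n t = 0"
      by (cases n; simp; rename_tac m; case_tac m; simp; rename_tac m'; case_tac m'; simp)
  qed
  then show "t < 0 \<Longrightarrow> cc n t = 0" "t < 0 \<Longrightarrow> dd n t = 0" by auto
qed

lemma sum_shift_int: "sum f {(a::int)+1..b+1} = (\<Sum>t\<in>{a..b}. f (t + 1))"
proof -
  have e: "{a+1..b+1} = (\<lambda>t. t + 1) ` {a..b}" by (simp add: image_add_atLeastAtMost')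
  have "inj_on (\<lambda>t::int. t + 1) {a..b}" by (simp add: inj_on_def)
  then have "sum f ((\<lambda>t. t + 1) ` {a..b}) = sum (f \<circ> (\<lambda>t. t + 1)) {a..b}" by (rule sum.reindex)
  then show ?thesis unfolding e by (simp add: comp_def)
qed

lemma nat3: "n \<ge> 3 \<Longrightarrow> \<exists>m. n = Suc (Suc (Suc m))"
  by presburger

lemma cc_zero: "n \<ge> 2 \<Longrightarrow> cc n 0 = 1" and dd_zero: "n \<ge> 2 \<Longrightarrow> dd n 0 = 1"
proof -
  assume "n \<ge> 2"
  then obtain m where "n = Suc (Suc m)" by (metis add_2_eq_Suc le_Suc_ex)
  then show "cc n 0 = 1" "dd n 0 = 1" by (cases m; simp)+
qed

lemma cc_rec: "n \<ge> 3 \<Longrightarrow> cc n t = dd (n - 1) (t - 1) + cc (n - 1) t"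
proof -
  assume "n \<ge> 3"
  then obtain m where m: "n = Suc (Suc (Suc m))" using nat3 by blast
  show ?thesis
  proof (cases "t < 0")
    case True then show ?thesis using m by (simp add: cc_neg dd_neg)
  next
    case False
    show ?thesis
    proof (cases "t = 0")
      case True then show ?thesis using m by (simp add: dd_neg cc_zero)
    next
      case False then show ?thesis using m \<open>\<not> t < 0\<close> by simp
    qed
  qed
qed

lemma dd_rec: "n \<ge> 3 \<Longrightarrow> dd n t = cc (n - 1) t"
proof -
  assume "n \<ge> 3"
  then obtain m where m: "n = Suc (Suc (Suc m))" using nat3 by blast
  show ?thesis
  proof (cases "t < 0")
    case True then show ?thesis using m by (simp add: cc_neg dd_neg)
  next
    case False
    show ?thesis
    proof (cases "t = 0")
      case True then show ?thesis using m by (simp add: dd_neg cc_zero)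
    next
      case False then show ?thesis using m \<open>\<not> t < 0\<close> by simp
    qed
  qed
qed

lemma ccdd_vanish: "(t \<ge> 1 \<longrightarrow> 2 * t \<ge> int n \<longrightarrow> cc n t = 0) \<and> (t \<ge> 1 \<longrightarrow> 2 * t \<ge> int n - 1 \<longrightarrow> dd n t = 0)"
proof (induction n arbitrary: t rule: less_induct)
  case (less n)
  show ?case
  proof (cases "n \<ge> 3")
    case True
    have c: "cc n t = dd (n - 1) (t - 1) + cc (n - 1) t" using cc_rec True by blast
    have d: "dd n t = cc (n - 1) t" using dd_rec True by blast
    have ih1: "t - 1 \<ge> 1 \<longrightarrow> 2 * (t - 1) \<ge> int (n - 1) - 1 \<longrightarrow> dd (n - 1) (t - 1) = 0"
      using less[of "n - 1"] True by auto
    have ih2: "t \<ge> 1 \<longrightarrow> 2 * t \<ge> int (n - 1) \<longrightarrow> cc (n - 1) t = 0"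
      using less[of "n - 1"] True by auto
    show ?thesis using c d ih1 ih2 True by auto
  next
    case False
    then have "n = 0 \<or> n = 1 \<or> n = 2" by auto
    then show ?thesis by (auto simp: numeral_2_eq_2)
  qed
qed

lemma cc_vanish: "t \<ge> 1 \<Longrightarrow> 2 * t \<ge> int n \<Longrightarrow> cc n t = 0"
  using ccdd_vanish by blast
lemma dd_vanish: "t \<ge> 1 \<Longrightarrow> 2 * t \<ge> int n - 1 \<Longrightarrow> dd n t = 0"
  using ccdd_vanish by blast



definition Gam :: "'a::comm_ring_1 \<Rightarrow> 'a \<Rightarrow> 'a \<Rightarrow> int \<Rightarrow> 'a" where
  "Gam u x y k = (\<Sum>t\<in>{0..k}. of_int ((-1) ^ nat (k + t) * cc (nat (k + 1)) t)
                     * u ^ nat (k - 2 * t) * x ^ nat (k - 2 * t) * y ^ nat t)"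

definition Del :: "'a::comm_ring_1 \<Rightarrow> 'a \<Rightarrow> 'a \<Rightarrow> int \<Rightarrow> 'a" where
  "Del u x y k = (\<Sum>t\<in>{0..k}. of_int ((-1) ^ nat (k + t) * dd (nat (k + 1)) t)
                     * u ^ nat (k - 2 * t - 1) * x ^ nat (k - 2 * t - 1) * y ^ nat (t + 1))"

lemma Del_rec:
  fixes u x y :: "'a::comm_ring_1" and k :: int
  assumes k: "k \<ge> 1"
  shows "Del u x y (k + 1) = - (y * Gam u x y k)"
proof -
  have s: "{0..k+1} = insert (k+1) {0..k}" using k by auto
  have z: "dd (nat (k + 1 + 1)) (k + 1) = 0" using k by (intro dd_vanish) auto
  have "Del u x y (k + 1) = (\<Sum>t\<in>{0..k}. of_int ((-1) ^ nat (k + 1 + t) * dd (nat (k + 1 + 1)) t)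
                     * u ^ nat (k + 1 - 2 * t - 1) * x ^ nat (k + 1 - 2 * t - 1) * y ^ nat (t + 1))"
    unfolding Del_def s using z by simp
  also have "\<dots> = (\<Sum>t\<in>{0..k}. - (y * (of_int ((-1) ^ nat (k + t) * cc (nat (k + 1)) t)
                     * u ^ nat (k - 2 * t) * x ^ nat (k - 2 * t) * y ^ nat t)))"
  proof (rule sum.cong[OF refl])
    fix t assume t: "t \<in> {0..k}"
    have e1: "nat (k + 1 + t) = Suc (nat (k + t))" using t k by auto
    have e2: "nat (t + 1) = Suc (nat t)" using t by auto
    have e3: "dd (nat (k + 1 + 1)) t = cc (nat (k + 1)) t"
      using dd_rec[of "nat (k+1+1)" t] k by (simp add: nat_add_distrib)
    have e4: "k + 1 - 2 * t - 1 = k - 2 * t" by simp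
    show "of_int ((-1) ^ nat (k + 1 + t) * dd (nat (k + 1 + 1)) t)
                     * u ^ nat (k + 1 - 2 * t - 1) * x ^ nat (k + 1 - 2 * t - 1) * y ^ nat (t + 1)
       = - (y * (of_int ((-1) ^ nat (k + t) * cc (nat (k + 1)) t)
                     * u ^ nat (k - 2 * t) * x ^ nat (k - 2 * t) * y ^ nat t))"
      unfolding e1 e2 e3 e4 by (simp add: algebra_simps)
  qed
  also have "\<dots> = - (y * Gam u x y k)"
    unfolding Gam_def by (simp add: sum_distrib_left sum_negf)
  finally show ?thesis .
qed

lemma Gam_rec:
  fixes u x y :: "'a::comm_ring_1" and k :: int
  assumes k: "k \<ge> 1"
  shows "Gam u x y (k + 1) = Del u x y k - u * x * Gam u x y k"
proof -
  define A where "A t = of_int ((-1) ^ nat (k + 1 + t) * dd (nat (k + 1)) (t - 1))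
                     * u ^ nat (k + 1 - 2 * t) * x ^ nat (k + 1 - 2 * t) * (y::'a) ^ nat t" for t :: int
  define B where "B t = of_int ((-1) ^ nat (k + 1 + t) * cc (nat (k + 1)) t)
                     * u ^ nat (k + 1 - 2 * t) * x ^ nat (k + 1 - 2 * t) * (y::'a) ^ nat t" for t :: int
  have "Gam u x y (k + 1) = (\<Sum>t\<in>{0..k+1}. A t + B t)"
    unfolding Gam_def
  proof (rule sum.cong[OF refl])
    fix t assume t: "t \<in> {0..k+1}"
    have "cc (nat (k + 1 + 1)) t = dd (nat (k + 1)) (t - 1) + cc (nat (k + 1)) t"
      using cc_rec[of "nat (k+1+1)" t] k by (simp add: nat_add_distrib)
    then show "of_int ((-1) ^ nat (k + 1 + t) * cc (nat (k + 1 + 1)) t) *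
         u ^ nat (k + 1 - 2 * t) * x ^ nat (k + 1 - 2 * t) * y ^ nat t = A t + B t"
      unfolding A_def B_def by (simp add: algebra_simps)
  qed
  also have "\<dots> = sum A {0..k+1} + sum B {0..k+1}" by (simp add: sum.distrib)
  also have "sum A {0..k+1} = Del u x y k"
  proof -
    have s: "{0..k+1} = insert 0 {1..k+1}" using k by auto
    have "A 0 = 0" unfolding A_def by (simp add: dd_neg)
    then have "sum A {0..k+1} = sum A {1..k+1}" unfolding s by simp
    also have "\<dots> = sum (\<lambda>t. A (t + 1)) {0..k}"
      using sum_shift_int[of A 0 k] by simp
    also have "\<dots> = Del u x y k" unfolding Del_def
    proof (rule sum.cong[OF refl])
      fix t assume t: "t \<in> {0..k}"
      have e1: "(-1::int) ^ nat (k + 1 + (t + 1)) = (-1) ^ nat (k + t)"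
      proof -
        have "nat (k + 1 + (t + 1)) = Suc (Suc (nat (k + t)))" using t k by auto
        then show ?thesis by simp
      qed
      have e2: "k + 1 - 2 * (t + 1) = k - 2 * t - 1" by simp
      show "A (t + 1) = of_int ((-1) ^ nat (k + t) * dd (nat (k + 1)) t) *
         u ^ nat (k - 2 * t - 1) * x ^ nat (k - 2 * t - 1) * y ^ nat (t + 1)"
        unfolding A_def e1 e2 by simp
    qed
    finally show ?thesis .
  qed
  also have "sum B {0..k+1} = - (u * x * Gam u x y k)"
  proof -
    have s: "{0..k+1} = insert (k+1) {0..k}" using k by auto
    have "B (k+1) = 0" unfolding B_def using k by (simp add: cc_vanish)
    then have "sum B {0..k+1} = sum B {0..k}" unfolding s by simp
    also have "\<dots> = (\<Sum>t\<in>{0..k}. - (u * x * (of_int ((-1) ^ nat (k + t) * cc (nat (k + 1)) t)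
                     * u ^ nat (k - 2 * t) * x ^ nat (k - 2 * t) * y ^ nat t)))"
    proof (rule sum.cong[OF refl])
      fix t assume t: "t \<in> {0..k}"
      show "B t = - (u * x * (of_int ((-1) ^ nat (k + t) * cc (nat (k + 1)) t)
                     * u ^ nat (k - 2 * t) * x ^ nat (k - 2 * t) * y ^ nat t))"
      proof (cases "2 * t \<le> k")
        case True
        have e1: "nat (k + 1 + t) = Suc (nat (k + t))" using t k by auto
        have e2: "nat (k + 1 - 2 * t) = Suc (nat (k - 2 * t))" using True by auto
        show ?thesis unfolding B_def e1 e2 by (simp add: algebra_simps)
      next
        case False
        then have "cc (nat (k + 1)) t = 0" using t by (intro cc_vanish) auto
        then show ?thesis unfolding B_def by simp
      qed
    qed
    also have "\<dots> = - (u * x * Gam u x y k)"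
      unfolding Gam_def by (simp add: sum_distrib_left sum_negf)
    finally show ?thesis .
  qed
  finally show ?thesis by simp
qed



lemma neg1_pow: "a \<ge> 0 \<Longrightarrow> (-1::int) ^ nat a = (if even a then 1 else -1)"
  by (simp add: even_nat_iff)

definition Ecoef :: "int \<Rightarrow> int \<Rightarrow> int" where
  "Ecoef r t = (if r = 0 \<and> t = 0 then -1 else (-1) ^ nat (t + r + 1) * cc (nat (t + 2 * r + 1)) r)"

definition Ssum :: "'a::comm_ring_1 \<Rightarrow> 'a \<Rightarrow> 'a \<Rightarrow> 'a \<Rightarrow> 'a \<Rightarrow> int \<Rightarrow> 'a" where
  "Ssum P u x y w k = (\<Sum>r\<in>{0..k}. \<Sum>t\<in>{0..k}. if 2 * r + t \<le> k - 1 then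
      of_int (Ecoef r t) * u ^ nat t * P ^ nat (k - 1 - 2 * r - t) * x ^ nat t * y ^ nat r * w else 0)"

lemma Ssum_rec:
  fixes P u x y w :: "'a::comm_ring_1" and k :: int
  assumes k: "k \<ge> 1"
  shows "Ssum P u x y w (k + 1) = P * Ssum P u x y w k - w * Gam u x y k"
proof -
  define F where "F r t = (if 2 * r + t \<le> k then
      of_int (Ecoef r t) * u ^ nat t * P ^ nat (k - 2 * r - t) * x ^ nat t * y ^ nat r * w else 0)" for r t
  define G where "G r t = (if 2 * r + t \<le> k - 1 then
      of_int (Ecoef r t) * u ^ nat t * P ^ nat (k - 1 - 2 * r - t) * x ^ nat t * y ^ nat r * w else 0)" for r t
  define H where "H r t = of_int (Ecoef r t) * u ^ nat t * x ^ nat t * y ^ nat r * w" for r t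
  have s: "{0..k+1} = insert (k+1) {0..k}" using k by auto
  have "Ssum P u x y w (k + 1) = (\<Sum>r\<in>{0..k+1}. \<Sum>t\<in>{0..k+1}. F r t)"
  proof -
    have h: "k + 1 - 1 = k" by simp
    show ?thesis unfolding Ssum_def F_def h by simp
  qed
  also have "\<dots> = (\<Sum>r\<in>{0..k}. \<Sum>t\<in>{0..k}. F r t)"
  proof -
    have "\<And>r. r \<in> {0..k+1} \<Longrightarrow> (\<Sum>t\<in>{0..k+1}. F r t) = (\<Sum>t\<in>{0..k}. F r t)"
      unfolding s using k by (auto simp: F_def)
    then have "(\<Sum>r\<in>{0..k+1}. \<Sum>t\<in>{0..k+1}. F r t) = (\<Sum>r\<in>{0..k+1}. \<Sum>t\<in>{0..k}. F r t)"
      by (rule sum.cong[OF refl])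
    also have "\<dots> = (\<Sum>r\<in>{0..k}. \<Sum>t\<in>{0..k}. F r t)"
      unfolding s using k by (auto simp: F_def intro!: sum.neutral)
    finally show ?thesis .
  qed
  also have "\<dots> = (\<Sum>r\<in>{0..k}. \<Sum>t\<in>{0..k}. P * G r t + (if t = k - 2 * r then H r t else 0))"
  proof (intro sum.cong refl)
    fix r t assume r: "r \<in> {0..k}" and t: "t \<in> {0..k}"
    show "F r t = P * G r t + (if t = k - 2 * r then H r t else 0)"
    proof (cases "2 * r + t \<le> k - 1")
      case True
      have "nat (k - 2 * r - t) = Suc (nat (k - 1 - 2 * r - t))" using True by auto
      then show ?thesis using True unfolding F_def G_def by (simp add: algebra_simps)
    next
      case False
      then show ?thesis unfolding F_def G_def H_def by (auto simp: algebra_simps)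
    qed
  qed
  also have "\<dots> = P * Ssum P u x y w k + (\<Sum>r\<in>{0..k}. \<Sum>t\<in>{0..k}. (if t = k - 2 * r then H r t else 0))"
    unfolding Ssum_def G_def by (simp add: sum.distrib sum_distrib_left)
  also have "(\<Sum>r\<in>{0..k}. \<Sum>t\<in>{0..k}. (if t = k - 2 * r then H r t else 0))
      = (\<Sum>r\<in>{0..k}. if k - 2 * r \<in> {0..k} then H r (k - 2 * r) else 0)"
    by (simp add: sum.delta)
  also have "\<dots> = (\<Sum>r\<in>{0..k}. - (w * (of_int ((-1) ^ nat (k + r) * cc (nat (k + 1)) r)
                     * u ^ nat (k - 2 * r) * x ^ nat (k - 2 * r) * y ^ nat r)))"
  proof (rule sum.cong[OF refl])
    fix r assume r: "r \<in> {0..k}"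
    show "(if k - 2 * r \<in> {0..k} then H r (k - 2 * r) else 0) = - (w * (of_int ((-1) ^ nat (k + r) * cc (nat (k + 1)) r)
                     * u ^ nat (k - 2 * r) * x ^ nat (k - 2 * r) * y ^ nat r))"
    proof (cases "2 * r \<le> k")
      case True
      have e: "Ecoef r (k - 2 * r) = - ((-1) ^ nat (k + r) * cc (nat (k + 1)) r)"
      proof -
        have "\<not> (r = 0 \<and> k - 2 * r = 0)" using k by auto
        then have "Ecoef r (k - 2 * r) = (-1) ^ nat (k - r + 1) * cc (nat (k + 1)) r"
          unfolding Ecoef_def by (simp add: algebra_simps)
        moreover have "(-1::int) ^ nat (k - r + 1) = - ((-1) ^ nat (k + r))"
          using True r by (simp add: neg1_pow; presburger)
        ultimately show ?thesis by simp
      qed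
      show ?thesis using True r unfolding H_def e by (simp add: algebra_simps)
    next
      case False
      then have "cc (nat (k + 1)) r = 0" using k r by (intro cc_vanish) auto
      then show ?thesis using False by simp
    qed
  qed
  also have "\<dots> = - (w * Gam u x y k)"
    unfolding Gam_def by (simp add: sum_distrib_left sum_negf)
  finally show ?thesis by simp
qed

definition Mrec :: "'a::comm_ring_1 \<Rightarrow> 'a \<Rightarrow> 'a \<Rightarrow> 'a \<Rightarrow> nat \<Rightarrow> 'a" where
  "Mrec P u x y n = (\<Sum>j<n. P ^ (n - 1 - j) * Gam u x y (int j + 1)) + P ^ n"

lemma main_identity:
  fixes P u x y w :: "'a::comm_ring_1"
  shows "P ^ (n + 2) - (Gam u x y (int n + 1) * P + Del u x y (int n + 1) + Ssum P u x y w (int n + 1))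
         = Mrec P u x y n * (P ^ 2 + u * P * x + y + w)"
proof (induction n)
  case 0
  have g: "Gam u x y 1 = - (u * x)"
  proof -
    have "{0..1::int} = {0, 1}" by auto
    then show ?thesis unfolding Gam_def by (simp add: cc_vanish cc_zero)
  qed
  have d: "Del u x y 1 = - y"
  proof -
    have "{0..1::int} = {0, 1}" by auto
    then show ?thesis unfolding Del_def by (simp add: dd_vanish dd_zero)
  qed
  have s: "Ssum P u x y w 1 = - w"
  proof -
    have "{0..1::int} = {0, 1}" by auto
    then show ?thesis unfolding Ssum_def by (simp add: Ecoef_def)
  qed
  show ?case unfolding Mrec_def using g d s by (simp add: algebra_simps power2_eq_square)
next
  case (Suc n)
  define k where "k = int n + 1"
  have k: "k \<ge> 1" unfolding k_def by simp
  have e: "int (Suc n) + 1 = k + 1" unfolding k_def by simp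
  have M: "Mrec P u x y (Suc n) = P * Mrec P u x y n + Gam u x y k"
  proof -
    have a: "Mrec P u x y (Suc n) = (\<Sum>j<n. P ^ (n - j) * Gam u x y (int j + 1)) + Gam u x y k + P ^ Suc n"
      unfolding Mrec_def k_def by simp
    have b: "(\<Sum>j<n. P ^ (n - j) * Gam u x y (int j + 1)) = P * (\<Sum>j<n. P ^ (n - 1 - j) * Gam u x y (int j + 1))"
      unfolding sum_distrib_left
    proof (rule sum.cong[OF refl])
      fix j assume "j \<in> {..<n}"
      then have "n - j = Suc (n - 1 - j)" by auto
      then show "P ^ (n - j) * Gam u x y (int j + 1) = P * (P ^ (n - 1 - j) * Gam u x y (int j + 1))"
        by simp
    qed
    have c: "P * Mrec P u x y n = P * (\<Sum>j<n. P ^ (n - 1 - j) * Gam u x y (int j + 1)) + P ^ Suc n"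
      unfolding Mrec_def by (simp add: algebra_simps)
    show ?thesis unfolding a b c by (simp add: algebra_simps)
  qed
  have IH: "P ^ (n + 2) = Gam u x y k * P + Del u x y k + Ssum P u x y w k + Mrec P u x y n * (P ^ 2 + u * P * x + y + w)"
    using Suc.IH unfolding k_def by (simp add: algebra_simps)
  show ?case unfolding e M Gam_rec[OF k] Del_rec[OF k] Ssum_rec[OF k]
  proof -
    have "P ^ (Suc n + 2) = P * P ^ (n + 2)" by simp
    then show "P ^ (Suc n + 2) -
    ((Del u x y k - u * x * Gam u x y k) * P + - (y * Gam u x y k) + (P * Ssum P u x y w k - w * Gam u x y k)) =
    (P * Mrec P u x y n + Gam u x y k) * (P\<^sup>2 + u * P * x + y + w)"
      unfolding IH by (simp add: algebra_simps power2_eq_square)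
  qed
qed



definition Phi :: "int \<Rightarrow> int \<Rightarrow> rat poly \<Rightarrow> elt" where
  "Phi a b m = (\<lambda>q. if fst q = a \<and> a \<ge> 1 \<and> snd q \<ge> 1 \<and> snd q \<le> b
      then monom (coeff m (nat (b - snd q))) (nat (b - snd q)) else 0)"

lemma Phi_0: "Phi a b 0 = (\<lambda>q. 0)"
  unfolding Phi_def by auto

lemma Phi_add: "Phi a b (f + g) = eadd (Phi a b f) (Phi a b g)"
  unfolding Phi_def eadd_def by (auto simp: add_monom)

lemma Phi_diff: "(\<lambda>q. Phi a b f q - Phi a b g q) = Phi a b (f - g)"
  unfolding Phi_def by (auto simp: diff_monom)

lemma Phi_sum: "Phi a b (sum f I) = esum (\<lambda>i. Phi a b (f i)) I"
proof (cases "finite I")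
  case True
  then show ?thesis
  proof (induction I rule: finite_induct)
    case empty then show ?case by (simp add: Phi_0 esum_def)
  next
    case (insert i I)
    then show ?case by (simp add: Phi_add esum_def eadd_def)
  qed
next
  case False
  then show ?thesis by (simp add: Phi_0 esum_def)
qed

lemma cst_vp: "s \<ge> 0 \<Longrightarrow> cst c * vp s = monom c (nat s)"
  unfolding cst_def vp_def by (simp add: smult_monom)

lemma Phi_shift: "sc (cst c * vp s) (Phi a (b - s) m) = Phi a b ([:c:] * vp s * m)"
proof (cases "s < 0")
  case True
  then show ?thesis by (simp add: vp_def sc_def Phi_0)
next
  case False
  define n where "n = nat s"
  have sn: "s = int n" using False n_def by simp
  have m1: "cst c * vp s = monom c n" using False cst_vp n_def by simp
  have m2: "[:c:] * vp s * m = monom c n * m" using m1 by (simp add: cst_def)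
  show ?thesis unfolding m1 m2
  proof
    fix q :: "int \<times> int"
    obtain a' j where q: "q = (a', j)" by fastforce
    show "sc (monom c n) (Phi a (b - s) m) q = Phi a b (monom c n * m) q"
    proof (cases "a' = a \<and> a \<ge> 1 \<and> j \<ge> 1 \<and> j \<le> b")
      case True
      show ?thesis
      proof (cases "j \<le> b - s")
        case True2: True
        have e1: "nat (b - j) = n + nat (b - s - j)" using True2 sn by auto
        show ?thesis using True True2 unfolding q sc_def Phi_def
          by (simp add: coeff_monom_mult mult_monom e1)
      next
        case False2: False
        have "nat (b - j) < n" using False2 True sn by auto
        then show ?thesis using True False2 unfolding q sc_def Phi_def
          by (simp add: coeff_monom_mult)
      qed
    next
      case False3: False
      then show ?thesis using sn unfolding q sc_def Phi_def by auto
    qed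
  qed
qed

lemma br_Phi: "br a b = Phi a b 1"
proof
  fix q :: "int \<times> int"
  obtain a' j where q: "q = (a', j)" by fastforce
  show "br a b q = Phi a b 1 q"
    unfolding q br_def Phi_def by (auto simp: coeff_1)
qed

lemma sc_br: "sc (cst c * vp s) (br a (b - s)) = Phi a b ([:c:] * vp s)"
  using Phi_shift[of c s a b 1] by (simp add: br_Phi)

lemma vp_0: "vp 0 = 1" by (simp add: vp_def)

lemma sc_br0: "sc (cst c) (br a b) = Phi a b [:c:]"
  using sc_br[of c 0 a b] by (simp add: vp_0)

lemma vp_add: "s1 \<ge> 0 \<Longrightarrow> s2 \<ge> 0 \<Longrightarrow> vp (s1 + s2) = vp s1 * vp s2"
  unfolding vp_def by (simp add: mult_monom nat_add_distrib)

lemma vp_mult: "vp s1 * vp s2 = (if s1 \<ge> 0 \<and> s2 \<ge> 0 then vp (s1 + s2) else 0)"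
proof (cases "s1 \<ge> 0 \<and> s2 \<ge> 0")
  case True then show ?thesis using vp_add by simp
next
  case False
  then have "vp s1 = 0 \<or> vp s2 = 0" by (auto simp: vp_def)
  then show ?thesis using False by auto
qed

lemma sc_br2: "sc (cst c * vp s1 * vp s2) (br a (b - s1 - s2)) = Phi a b ([:c:] * vp s1 * vp s2)"
proof (cases "s1 \<ge> 0 \<and> s2 \<ge> 0")
  case True
  then show ?thesis using sc_br[of c "s1 + s2" a b]
    by (simp add: vp_add mult.assoc diff_diff_eq)
next
  case False
  then have "vp s1 * vp s2 = 0" by (simp only: vp_mult if_not_P[OF False] if_False)
  then have z1: "cst c * vp s1 * vp s2 = 0" and z2: "[:c:] * vp s1 * vp s2 = 0"
    by (simp_all only: mult.assoc mult_zero_right)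
  show ?thesis unfolding z1 z2 by (simp add: sc_def Phi_0)
qed

definition Rp :: "nat \<Rightarrow> rat poly" where
  "Rp p = (\<Sum>t\<in>{0 .. int (p ^ 2) - 1}. [:of_nat (p ^ 2 choose nat (t + 1)):] * vp t)"

definition Qp :: "nat \<Rightarrow> rat poly" where
  "Qp p = (\<Sum>i\<in>{1 .. int p - 2}. [:of_nat (p ^ 2 choose nat (i + 1)):] * vp i)
        + (\<Sum>i\<in>{int p .. int p ^ 2 - 2}. [:of_nat (p ^ 2 choose nat (i + 1)):] * vp i)"

lemma rel_Phi: "rel p i j = Phi i j (Rp p)"
  unfolding rel_def acoef_def Rp_def Phi_sum
  by (intro arg_cong2[where f=esum] ext refl) (simp add: sc_br)

lemma AB_Phi: "AB p a b = Phi a b (Qp p)"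
  unfolding AB_def Aterm_def Bterm_def Qp_def Phi_add Phi_sum
  by (simp only: sc_br)

lemma sc_AB: "sc (cst c * vp s) (AB p a (b - s)) = Phi a b ([:c:] * vp s * Qp p)"
  unfolding AB_Phi by (rule Phi_shift)



definition Zpoly :: "rat poly \<Rightarrow> bool" where
  "Zpoly f \<longleftrightarrow> (\<forall>n. coeff f n \<in> \<int>)"

lemma Zpoly_add: "Zpoly f \<Longrightarrow> Zpoly g \<Longrightarrow> Zpoly (f + g)"
  unfolding Zpoly_def by simp
lemma Zpoly_diff: "Zpoly f \<Longrightarrow> Zpoly g \<Longrightarrow> Zpoly (f - g)"
  unfolding Zpoly_def by simp
lemma Zpoly_uminus: "Zpoly f \<Longrightarrow> Zpoly (- f)"
  unfolding Zpoly_def by simp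
lemma Zpoly_mult: "Zpoly f \<Longrightarrow> Zpoly g \<Longrightarrow> Zpoly (f * g)"
  unfolding Zpoly_def coeff_mult by (auto intro!: Ints_sum Ints_mult)
lemma Zpoly_1: "Zpoly 1"
  unfolding Zpoly_def by (simp add: coeff_1)
lemma Zpoly_0: "Zpoly 0"
  unfolding Zpoly_def by simp
lemma Zpoly_power: "Zpoly f \<Longrightarrow> Zpoly (f ^ n)"
  by (induction n) (auto intro: Zpoly_mult Zpoly_1)
lemma Zpoly_sum: "(\<And>i. i \<in> I \<Longrightarrow> Zpoly (f i)) \<Longrightarrow> Zpoly (sum f I)"
  unfolding Zpoly_def by (auto simp: coeff_sum intro!: Ints_sum)
lemma Zpoly_const: "c \<in> \<int> \<Longrightarrow> Zpoly [:c:]"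
  unfolding Zpoly_def by (simp add: coeff_pCons split: nat.split)
lemma Zpoly_of_int: "Zpoly (of_int i)"
  by (simp add: of_int_poly Zpoly_const)
lemma Zpoly_vp: "Zpoly (vp s)"
  unfolding Zpoly_def vp_def by (auto simp: coeff_monom)

lemma zploc_Int: "prime p \<Longrightarrow> r \<in> \<int> \<Longrightarrow> zploc p r"
  unfolding zploc_def
proof -
  assume p: "prime p" and r: "r \<in> \<int>"
  then obtain m where "r = of_int m" by (auto elim: Ints_cases)
  moreover have "\<not> int p dvd 1" using p by (metis of_nat_1 of_nat_dvd_iff nat_dvd_1_iff_1 not_prime_1)
  ultimately show "\<exists>m n. n \<noteq> 0 \<and> \<not> int p dvd n \<and> r = rat_of_int m / rat_of_int n"
    by (intro exI[of _ m] exI[of _ 1]) auto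
qed

lemma zploc_0: "prime p \<Longrightarrow> zploc p 0"
  by (rule zploc_Int) auto

lemma rel_zero: "\<not> (i \<ge> 1 \<and> j \<ge> 1) \<Longrightarrow> rel p i j = (\<lambda>q. 0)"
  unfolding rel_Phi Phi_def by auto

lemma relspan_add:
  assumes "x \<in> relspan p" "zploc_poly p c"
  shows "(\<lambda>q. x q + c * rel p i j q) \<in> relspan p"
proof (cases "i \<ge> 1 \<and> j \<ge> 1")
  case True
  then show ?thesis using assms by (auto intro: relspan.step)
next
  case False
  then show ?thesis using assms by (simp add: rel_zero)
qed

lemma relspan_sum:
  assumes "finite S" "x \<in> relspan p" "\<And>s. s \<in> S \<Longrightarrow> zploc_poly p (c s)"
  shows "(\<lambda>q. x q + (\<Sum>s\<in>S. c s * rel p i (f s) q)) \<in> relspan p"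
  using assms
proof (induction S rule: finite_induct)
  case empty then show ?case by simp
next
  case (insert s S)
  have "(\<lambda>q. (x q + (\<Sum>s\<in>S. c s * rel p i (f s) q)) + c s * rel p i (f s) q) \<in> relspan p"
    using insert by (intro relspan_add) auto
  then show ?case using insert by (simp add: algebra_simps)
qed

lemma zploc_poly_monom: "prime p \<Longrightarrow> zploc p c \<Longrightarrow> zploc_poly p (monom c n)"
  unfolding zploc_poly_def by (auto simp: coeff_monom zploc_0)

lemma Phi_mult_R:
  assumes p: "prime p" and m: "Zpoly m"
  shows "Phi a b (m * Rp p) \<in> relspan p"
proof -
  have "m * Rp p = (\<Sum>n\<le>degree m. [:coeff m n:] * vp (int n) * Rp p)"
  proof -
    have "m * Rp p = (\<Sum>n\<le>degree m. monom (coeff m n) n) * Rp p"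
      by (simp add: poly_as_sum_of_monoms)
    also have "\<dots> = (\<Sum>n\<le>degree m. [:coeff m n:] * vp (int n) * Rp p)"
      by (simp add: sum_distrib_right vp_def smult_monom)
    finally show ?thesis .
  qed
  then have "Phi a b (m * Rp p) = esum (\<lambda>n. sc (cst (coeff m n) * vp (int n)) (rel p a (b - int n))) {..degree m}"
    by (simp add: Phi_sum Phi_shift rel_Phi)
  also have "\<dots> = (\<lambda>q. 0 + (\<Sum>n\<in>{..degree m}. (cst (coeff m n) * vp (int n)) * rel p a (b - int n) q))"
    unfolding esum_def sc_def by simp
  finally have e: "Phi a b (m * Rp p) = (\<lambda>q. 0 + (\<Sum>n\<in>{..degree m}. (cst (coeff m n) * vp (int n)) * rel p a (b - int n) q))" .
  show ?thesis unfolding e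
  proof (rule relspan_sum)
    show "(\<lambda>q. 0) \<in> relspan p" by (rule relspan.zero)
    fix n
    have "cst (coeff m n) * vp (int n) = monom (coeff m n) n" by (simp add: cst_vp)
    moreover have "zploc p (coeff m n)" using m p zploc_Int unfolding Zpoly_def by blast
    ultimately show "zploc_poly p (cst (coeff m n) * vp (int n))" using p by (simp add: zploc_poly_monom)
  qed simp
qed



lemma u1_int:
  assumes p: "prime p"
  shows "u1 p = of_nat ((p^2 - 1) choose (p - 1))" and "of_nat (p ^ 2 choose p) = u1 p * of_nat p"
proof -
  have p1: "p \<ge> 2" using p prime_ge_2_nat by blast
  have e: "Suc (p - 1) = p" "Suc (p^2 - 1) = p^2" using p1 by auto
  have "Suc (p - 1) * (Suc (p^2 - 1) choose Suc (p - 1)) = Suc (p^2 - 1) * ((p^2 - 1) choose (p - 1))"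
    by (rule Suc_times_binomial)
  then have "p * (p^2 choose p) = p^2 * ((p^2 - 1) choose (p - 1))" unfolding e .
  then have c: "(p^2 choose p) = p * ((p^2 - 1) choose (p - 1))" using p1 by (simp add: power2_eq_square)
  show "u1 p = of_nat ((p^2 - 1) choose (p - 1))" unfolding u1_def c using p1 by simp
  then show "of_nat (p ^ 2 choose p) = u1 p * of_nat p" unfolding c by simp
qed

lemma Rp_split:
  assumes p: "prime p"
  shows "Rp p = [:of_nat p:] ^ 2 + [:u1 p:] * [:of_nat p:] * vp (g1 p) + vp (g2 p) + Qp p"
proof -
  define q where "q = int p"
  define Q where "Q = int p ^ 2"
  have p1: "p \<ge> 2" using p prime_ge_2_nat by blast
  have q2: "q \<ge> 2" using p1 q_def by simp
  have Q2: "Q \<ge> 2 * q" unfolding Q_def q_def power2_eq_square using p1 by simp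
  have ip: "int (p ^ 2) = Q" unfolding Q_def by simp
  define f where "f t = [:of_nat (p ^ 2 choose nat (t + 1)):] * vp t" for t
  have S: "{0..Q - 1} = insert 0 (insert (q - 1) (insert (Q - 1) ({1..q - 2} \<union> {q..Q - 2})))"
    using q2 Q2 by auto
  have "Rp p = sum f {0..Q - 1}" unfolding Rp_def ip f_def ..
  also have "\<dots> = f 0 + f (q - 1) + f (Q - 1) + (sum f {1..q - 2} + sum f {q..Q - 2})"
    unfolding S using q2 Q2 by (simp add: sum.union_disjoint add.assoc)
  also have "f 0 = [:of_nat p:] ^ 2" unfolding f_def by (simp add: vp_0 poly_const_pow)
  also have "f (q - 1) = [:u1 p:] * [:of_nat p:] * vp (g1 p)"
  proof -
    have "nat (q - 1 + 1) = p" unfolding q_def by simp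
    then show ?thesis unfolding f_def g1_def q_def using u1_int(2)[OF p] by (simp add: mult_to_poly mult.commute)
  qed
  also have "f (Q - 1) = vp (g2 p)"
  proof -
    have "nat (Q - 1 + 1) = p ^ 2" unfolding Q_def by (simp add: nat_power_eq)
    then show ?thesis unfolding f_def g2_def Q_def by simp
  qed
  also have "sum f {1..q - 2} + sum f {q..Q - 2} = Qp p" unfolding Qp_def f_def q_def Q_def ..
  finally show ?thesis .
qed



lemma TWG: "C = of_int c * a ^ n * r \<Longrightarrow> V = X ^ n * Y ^ j \<Longrightarrow>
   [:C:] * V = of_int c * [:a:] ^ n * X ^ n * Y ^ j * [:r:]"
proof -
  assume C: "C = of_int c * a ^ n * r" and V: "V = X ^ n * Y ^ j"
  have "[:C:] = of_int c * [:a:] ^ n * [:r:]" unfolding C by (simp add: of_int_poly poly_const_pow mult_to_poly)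
  then show ?thesis unfolding V by (simp add: mult_ac)
qed

lemma TWD: "C = of_int c * a ^ n \<Longrightarrow> V = X ^ n * Y ^ j \<Longrightarrow>
   [:C:] * V = of_int c * [:a:] ^ n * X ^ n * Y ^ j"
proof -
  assume C: "C = of_int c * a ^ n" and V: "V = X ^ n * Y ^ j"
  have "[:C:] = of_int c * [:a:] ^ n" unfolding C by (simp add: of_int_poly poly_const_pow mult_to_poly)
  then show ?thesis unfolding V by (simp add: mult_ac)
qed

lemma TWS: "C = of_int c * a ^ n * r ^ m \<Longrightarrow> V = X ^ i * Y ^ j \<Longrightarrow>
   [:C:] * V * W = of_int c * [:a:] ^ n * [:r:] ^ m * X ^ i * Y ^ j * W"
proof -
  assume C: "C = of_int c * a ^ n * r ^ m" and V: "V = X ^ i * Y ^ j"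
  have "[:C:] = of_int c * [:a:] ^ n * [:r:] ^ m" unfolding C by (simp add: of_int_poly poly_const_pow mult_to_poly)
  then show ?thesis unfolding V by (simp add: mult_ac)
qed

lemma powi_nn: "0 \<le> e \<Longrightarrow> (r::rat) powi e = r ^ nat e"
  by (simp add: power_int_def)

lemma sgn_nn: "0 \<le> e \<Longrightarrow> ((-1)::rat) powi e = of_int ((-1) ^ nat e)"
  by (simp add: power_int_def)

lemma vp_lin: "0 \<le> e \<Longrightarrow> 0 \<le> g \<Longrightarrow> vp (e * g) = vp g ^ nat e"
  unfolding vp_def by (simp add: monom_power nat_mult_distrib mult.commute not_less mult_nonneg_nonneg)

lemma vp_lin2: "0 \<le> e1 \<Longrightarrow> 0 \<le> e2 \<Longrightarrow> 0 \<le> g \<Longrightarrow> 0 \<le> h \<Longrightarrow>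
    vp (e1 * g + e2 * h) = vp g ^ nat e1 * vp h ^ nat e2"
  by (simp add: vp_add vp_lin)

lemma g_nn: "p \<ge> 1 \<Longrightarrow> g1 p \<ge> 0" "p \<ge> 1 \<Longrightarrow> g2 p \<ge> 0"
  unfolding g1_def g2_def by (simp_all add: one_le_power)

lemma sum_restrict:
  assumes "finite B" "A \<subseteq> B" "\<And>i. i \<in> B \<Longrightarrow> (Q i \<longleftrightarrow> i \<in> A)"
  shows "(\<Sum>i\<in>B. if Q i then f i else 0) = sum f A"
proof -
  have "(\<Sum>i\<in>B. if Q i then f i else 0) = (\<Sum>i\<in>B. if i \<in> A then f i else 0)"
    by (rule sum.cong) (auto simp: assms(3))
  also have "\<dots> = sum f (B \<inter> A)" by (simp add: sum.inter_restrict assms(1))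
  also have "B \<inter> A = A" using assms(2) by auto
  finally show ?thesis .
qed



lemma B1:
  assumes p: "prime p" and k: "k \<ge> 2"
  shows "[:(-1) powi k * u1 p powi k * of_nat p:] * vp (k * g1 p)
     + (\<Sum>t\<in>{1..k div 2}. [:of_int (cc (nat (k + 1)) t) * (-1) powi (k + t) * u1 p powi (k - 2 * t) * of_nat p:]
                     * vp ((k - 2 * t) * g1 p + t * g2 p))
     = Gam [:u1 p:] (vp (g1 p)) (vp (g2 p)) k * [:of_nat p:]"
proof -
  have p1: "p \<ge> 1" using p prime_ge_1_nat by blast
  define f where "f t = of_int ((-1) ^ nat (k + t) * cc (nat (k + 1)) t) * [:u1 p:] ^ nat (k - 2 * t)
     * vp (g1 p) ^ nat (k - 2 * t) * vp (g2 p) ^ nat t * [:of_nat p:]" for t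
  have "Gam [:u1 p:] (vp (g1 p)) (vp (g2 p)) k * [:of_nat p:] = sum f {0..k}"
    unfolding Gam_def f_def by (simp only: sum_distrib_right)
  also have "\<dots> = sum f {0..k div 2}"
  proof (rule sum.mono_neutral_right)
    show "\<forall>i\<in>{0..k} - {0..k div 2}. f i = 0"
    proof
      fix i assume "i \<in> {0..k} - {0..k div 2}"
      then have "i \<ge> 1" "2 * i \<ge> int (nat (k + 1))" using k by auto
      then show "f i = 0" unfolding f_def by (simp add: cc_vanish)
    qed
  qed auto
  also have "\<dots> = f 0 + sum f {1..k div 2}"
  proof -
    have "{0..k div 2} = insert 0 {1..k div 2}" using k by auto
    then show ?thesis by simp
  qed
  also have "f 0 = [:(-1) powi k * u1 p powi k * of_nat p:] * vp (k * g1 p)"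
  proof -
    have "[:(-1) powi k * u1 p powi k * of_nat p:] * vp (k * g1 p)
      = of_int ((-1) ^ nat (k + 0) * cc (nat (k + 1)) 0) * [:u1 p:] ^ nat (k - 2 * 0)
     * vp (g1 p) ^ nat (k - 2 * 0) * vp (g2 p) ^ nat 0 * [:of_nat p:]"
      by (rule TWG) (use k p1 in \<open>simp_all add: powi_nn cc_zero vp_lin g_nn\<close>)
    then show ?thesis unfolding f_def by simp
  qed
  also have "sum f {1..k div 2} = (\<Sum>t\<in>{1..k div 2}. [:of_int (cc (nat (k + 1)) t) * (-1) powi (k + t) * u1 p powi (k - 2 * t) * of_nat p:]
                     * vp ((k - 2 * t) * g1 p + t * g2 p))"
  proof (rule sum.cong[OF refl])
    fix t assume t: "t \<in> {1..k div 2}"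
    then have t0: "0 \<le> t" "0 \<le> k - 2 * t" by auto
    show "f t = [:of_int (cc (nat (k + 1)) t) * (-1) powi (k + t) * u1 p powi (k - 2 * t) * of_nat p:]
                     * vp ((k - 2 * t) * g1 p + t * g2 p)"
      unfolding f_def
      by (rule TWG[symmetric]) (use t0 k p1 in \<open>simp_all add: powi_nn vp_lin2 g_nn\<close>)
  qed
  finally show ?thesis by simp
qed



lemma B2:
  assumes p: "prime p" and k: "k \<ge> 2"
  shows "[:(-1) powi k * u1 p powi (k - 1):] * vp ((k - 1) * g1 p + g2 p)
     + (\<Sum>t\<in>{1..k div 2}. [:of_int (dd (nat (k + 1)) t) * (-1) powi (k + t) * u1 p powi (k - 2 * t - 1):]
                     * vp ((k - 2 * t - 1) * g1 p) * vp ((t + 1) * g2 p))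
     = Del [:u1 p:] (vp (g1 p)) (vp (g2 p)) k"
proof -
  have p1: "p \<ge> 1" using p prime_ge_1_nat by blast
  define f where "f t = of_int ((-1) ^ nat (k + t) * dd (nat (k + 1)) t) * [:u1 p:] ^ nat (k - 2 * t - 1)
     * vp (g1 p) ^ nat (k - 2 * t - 1) * vp (g2 p) ^ nat (t + 1)" for t
  have "Del [:u1 p:] (vp (g1 p)) (vp (g2 p)) k = sum f {0..k}"
    unfolding Del_def f_def ..
  also have "\<dots> = sum f {0..k div 2}"
  proof (rule sum.mono_neutral_right)
    show "\<forall>i\<in>{0..k} - {0..k div 2}. f i = 0"
    proof
      fix i assume "i \<in> {0..k} - {0..k div 2}"
      then have "i \<ge> 1" "2 * i \<ge> int (nat (k + 1)) - 1" using k by auto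
      then show "f i = 0" unfolding f_def by (simp add: dd_vanish)
    qed
  qed auto
  also have "\<dots> = f 0 + sum f {1..k div 2}"
  proof -
    have "{0..k div 2} = insert 0 {1..k div 2}" using k by auto
    then show ?thesis by simp
  qed
  also have "f 0 = [:(-1) powi k * u1 p powi (k - 1):] * vp ((k - 1) * g1 p + g2 p)"
  proof -
    have v: "vp ((k - 1) * g1 p + g2 p) = vp (g1 p) ^ nat (k - 2 * 0 - 1) * vp (g2 p) ^ nat (0 + 1)"
      using k p1 by (simp add: vp_add vp_lin g_nn mult_nonneg_nonneg)
    have "[:(-1) powi k * u1 p powi (k - 1):] * vp ((k - 1) * g1 p + g2 p)
      = of_int ((-1) ^ nat (k + 0) * dd (nat (k + 1)) 0) * [:u1 p:] ^ nat (k - 2 * 0 - 1)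
     * vp (g1 p) ^ nat (k - 2 * 0 - 1) * vp (g2 p) ^ nat (0 + 1)"
      by (rule TWD[OF _ v]) (use k p1 in \<open>simp add: powi_nn dd_zero\<close>)
    then show ?thesis unfolding f_def by simp
  qed
  also have "sum f {1..k div 2} = (\<Sum>t\<in>{1..k div 2}. [:of_int (dd (nat (k + 1)) t) * (-1) powi (k + t) * u1 p powi (k - 2 * t - 1):]
                     * vp ((k - 2 * t - 1) * g1 p) * vp ((t + 1) * g2 p))"
  proof (rule sum.cong[OF refl])
    fix t assume t: "t \<in> {1..k div 2}"
    show "f t = [:of_int (dd (nat (k + 1)) t) * (-1) powi (k + t) * u1 p powi (k - 2 * t - 1):]
                     * vp ((k - 2 * t - 1) * g1 p) * vp ((t + 1) * g2 p)"
    proof (cases "2 * t < k")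
      case True
      then have t0: "0 \<le> t" "0 \<le> k - 2 * t - 1" using t by auto
      have v: "vp ((k - 2 * t - 1) * g1 p) * vp ((t + 1) * g2 p) = vp (g1 p) ^ nat (k - 2 * t - 1) * vp (g2 p) ^ nat (t + 1)"
        using t0 p1 by (simp add: vp_lin g_nn)
      show ?thesis unfolding f_def mult.assoc[of "[:_:]"]
        by (rule TWD[symmetric, OF _ v]) (use t0 k p1 in \<open>simp add: powi_nn\<close>)
    next
      case False
      then have "dd (nat (k + 1)) t = 0" using t k by (intro dd_vanish) auto
      then show ?thesis unfolding f_def by simp
    qed
  qed
  finally show ?thesis by simp
qed



lemma B3:
  assumes p: "prime p" and k: "k \<ge> 2"
  shows "(\<Sum>t\<in>{0..k - 1}. [:cT p t * of_nat p powi (k - t - 1):] * vp (t * g1 p) * Qp p)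
   + ((\<Sum>t\<in>{1..(k - 1) div 2}. [:cP t * of_nat p powi (k - 2 * t - 1):] * vp (t * g2 p) * Qp p)
   + (\<Sum>r\<in>{1..(k - 2) div 2}. \<Sum>t\<in>{1..k - 1 - 2 * r}.
        [:cRT p r t * of_nat p powi (k - 2 * r - t - 1):] * vp (r * g2 p + t * g1 p) * Qp p))
   = Ssum [:of_nat p:] [:u1 p:] (vp (g1 p)) (vp (g2 p)) (Qp p) k"
proof -
  have p1: "p \<ge> 1" using p prime_ge_1_nat by blast
  define F where "F r t = of_int (Ecoef r t) * [:u1 p:] ^ nat t * [:of_nat p:] ^ nat (k - 1 - 2 * r - t)
      * vp (g1 p) ^ nat t * vp (g2 p) ^ nat r * Qp p" for r t
  define G where "G r = (\<Sum>t\<in>{0..k}. if 2 * r + t \<le> k - 1 then F r t else 0)" for r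
  have "Ssum [:of_nat p:] [:u1 p:] (vp (g1 p)) (vp (g2 p)) (Qp p) k = sum G {0..k}"
    unfolding Ssum_def G_def F_def ..
  also have "\<dots> = G 0 + sum G {1..k}"
  proof -
    have "{0..k} = insert 0 {1..k}" using k by auto
    then show ?thesis by simp
  qed
  also have "G 0 = sum (\<lambda>t. F 0 t) {0..k - 1}"
    unfolding G_def by (rule sum_restrict) auto
  also have "sum G {1..k} = (\<Sum>r\<in>{1..k}. (if 2 * r + 0 \<le> k - 1 then F r 0 else 0))
      + (\<Sum>r\<in>{1..k}. \<Sum>t\<in>{1..k}. if 2 * r + t \<le> k - 1 then F r t else 0)"
  proof -
    have "{0..k} = insert 0 {1..k}" using k by auto
    then have "\<And>r. G r = (if 2 * r + 0 \<le> k - 1 then F r 0 else 0)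
      + (\<Sum>t\<in>{1..k}. if 2 * r + t \<le> k - 1 then F r t else 0)"
      unfolding G_def by simp
    then show ?thesis by (simp add: sum.distrib)
  qed
  also have "(\<Sum>r\<in>{1..k}. (if 2 * r + 0 \<le> k - 1 then F r 0 else 0)) = sum (\<lambda>r. F r 0) {1..(k - 1) div 2}"
  proof (rule sum_restrict)
    show "{1..(k - 1) div 2} \<subseteq> {1..k}" using k by (simp add: subset_iff; presburger)
    fix r assume "r \<in> {1..k}"
    then show "(2 * r + 0 \<le> k - 1) = (r \<in> {1..(k - 1) div 2})" by simp presburger
  qed simp
  also have "(\<Sum>r\<in>{1..k}. \<Sum>t\<in>{1..k}. if 2 * r + t \<le> k - 1 then F r t else 0)
      = (\<Sum>r\<in>{1..k}. if r \<in> {1..(k - 2) div 2} then (\<Sum>t\<in>{1..k - 1 - 2 * r}. F r t) else 0)"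
  proof (rule sum.cong[OF refl])
    fix r assume r: "r \<in> {1..k}"
    show "(\<Sum>t\<in>{1..k}. if 2 * r + t \<le> k - 1 then F r t else 0)
        = (if r \<in> {1..(k - 2) div 2} then (\<Sum>t\<in>{1..k - 1 - 2 * r}. F r t) else 0)"
    proof (cases "r \<in> {1..(k - 2) div 2}")
      case True
      then show ?thesis by (simp, intro sum_restrict) auto
    next
      case False
      then have "\<And>t. t \<in> {1..k} \<Longrightarrow> \<not> 2 * r + t \<le> k - 1" using r by simp presburger
      then have "(\<Sum>t\<in>{1..k}. if 2 * r + t \<le> k - 1 then F r t else 0) = 0"
        by (intro sum.neutral) auto
      then show ?thesis unfolding if_not_P[OF False] .
    qed
  qed
  also have "\<dots> = (\<Sum>r\<in>{1..(k - 2) div 2}. \<Sum>t\<in>{1..k - 1 - 2 * r}. F r t)"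
  proof (rule sum_restrict)
    show "{1..(k - 2) div 2} \<subseteq> {1..k}" using k by (simp add: subset_iff; presburger)
  qed simp_all
  finally have S: "Ssum [:of_nat p:] [:u1 p:] (vp (g1 p)) (vp (g2 p)) (Qp p) k
     = sum (\<lambda>t. F 0 t) {0..k - 1} + (sum (\<lambda>r. F r 0) {1..(k - 1) div 2}
        + (\<Sum>r\<in>{1..(k - 2) div 2}. \<Sum>t\<in>{1..k - 1 - 2 * r}. F r t))" by (simp add: add.assoc)
  have E4: "(\<Sum>t\<in>{0..k - 1}. [:cT p t * of_nat p powi (k - t - 1):] * vp (t * g1 p) * Qp p)
      = sum (\<lambda>t. F 0 t) {0..k - 1}"
  proof (rule sum.cong[OF refl])
    fix t assume t: "t \<in> {0..k - 1}"
    then have t0: "0 \<le> t" "0 \<le> k - t - 1" by auto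
    have ec: "Ecoef 0 t = (-1) ^ nat (t + 1)"
    proof (cases "t = 0")
      case True then show ?thesis by (simp add: Ecoef_def)
    next
      case False
      then have "nat (t + 2 * 0 + 1) \<ge> 2" using t0 by auto
      then show ?thesis using False by (simp add: Ecoef_def cc_zero)
    qed
    have v: "vp (t * g1 p) = vp (g1 p) ^ nat t * vp (g2 p) ^ nat 0"
      using t0 p1 by (simp add: vp_lin g_nn)
    have kk: "k - t - 1 = k - 1 - 2 * 0 - t" by simp
    show "[:cT p t * of_nat p powi (k - t - 1):] * vp (t * g1 p) * Qp p = F 0 t"
      unfolding F_def
      by (rule TWS[OF _ v]) (use t0 in \<open>simp add: cT_def powi_nn ec kk\<close>)
  qed
  have E5: "(\<Sum>t\<in>{1..(k - 1) div 2}. [:cP t * of_nat p powi (k - 2 * t - 1):] * vp (t * g2 p) * Qp p)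
      = sum (\<lambda>r. F r 0) {1..(k - 1) div 2}"
  proof (rule sum.cong[OF refl])
    fix r assume r: "r \<in> {1..(k - 1) div 2}"
    then have r0: "1 \<le> r" "0 \<le> k - 2 * r - 1" by auto
    have ec: "Ecoef r 0 = (-1) ^ nat (r + 1) * cc (nat (2 * r + 1)) r"
      using r0 by (simp add: Ecoef_def add.commute)
    have v: "vp (r * g2 p) = vp (g1 p) ^ nat 0 * vp (g2 p) ^ nat r"
      using r0 p1 by (simp add: vp_lin g_nn)
    show "[:cP r * of_nat p powi (k - 2 * r - 1):] * vp (r * g2 p) * Qp p = F r 0"
      unfolding F_def
      by (rule TWS[OF _ v]) (use r0 in \<open>simp add: cP_def powi_nn ec algebra_simps\<close>)
  qed
  have E6: "(\<Sum>r\<in>{1..(k - 2) div 2}. \<Sum>t\<in>{1..k - 1 - 2 * r}.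
        [:cRT p r t * of_nat p powi (k - 2 * r - t - 1):] * vp (r * g2 p + t * g1 p) * Qp p)
      = (\<Sum>r\<in>{1..(k - 2) div 2}. \<Sum>t\<in>{1..k - 1 - 2 * r}. F r t)"
  proof (intro sum.cong refl)
    fix r t assume r: "r \<in> {1..(k - 2) div 2}" and t: "t \<in> {1..k - 1 - 2 * r}"
    then have r0: "1 \<le> r" "1 \<le> t" "0 \<le> k - 2 * r - t - 1" by auto
    have ec: "Ecoef r t = (-1) ^ nat (t + r + 1) * cc (nat (t + 2 * r + 1)) r"
      using r0 by (simp add: Ecoef_def)
    have v: "vp (r * g2 p + t * g1 p) = vp (g1 p) ^ nat t * vp (g2 p) ^ nat r"
      using r0 p1 by (simp add: vp_lin vp_add g_nn mult_nonneg_nonneg mult.commute)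
    show "[:cRT p r t * of_nat p powi (k - 2 * r - t - 1):] * vp (r * g2 p + t * g1 p) * Qp p = F r t"
      unfolding F_def
      by (rule TWS[OF _ v]) (use r0 in \<open>simp add: cRT_def powi_nn ec algebra_simps\<close>)
  qed
  show ?thesis unfolding S E4 E5 E6 ..
qed



lemma sc_brA: "sc (cst c * vp (s1 + s2)) (br a (b - s1 - s2)) = Phi a b ([:c:] * vp (s1 + s2))"
  using sc_br[of c "s1 + s2" a b] by (simp add: diff_diff_eq)

lemma sc_ABA: "sc (cst c * vp (s1 + s2)) (AB p a (b - s1 - s2)) = Phi a b ([:c:] * vp (s1 + s2) * Qp p)"
  using sc_AB[of c "s1 + s2" p a b] by (simp add: diff_diff_eq)

lemma eadd_Phi: "eadd (Phi a b f) (Phi a b g) = Phi a b (f + g)"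
  by (simp add: Phi_add)

lemma esum_Phi: "esum (\<lambda>i. Phi a b (f i)) I = Phi a b (sum f I)"
  by (simp add: Phi_sum)

theorem theorem4p2:
  fixes p :: nat and a b k :: int
  assumes "prime p" and "k \<ge> 2"
  shows "ku_eq p
    (sc (cst (of_nat p ^ nat (k + 1))) (br a b))
    (eadd (sc (cst ((-1) powi k * u1 p powi k * of_nat p) * vp (k * g1 p)) (br a (b - k * g1 p)))
    (eadd (sc (cst ((-1) powi k * u1 p powi (k - 1)) * vp ((k - 1) * g1 p + g2 p))
              (br a (b - (k - 1) * g1 p - g2 p)))
    (eadd (esum (\<lambda>t. eadd
              (sc (cst (of_int (cc (nat (k + 1)) t) * (-1) powi (k + t) * u1 p powi (k - 2 * t) * of_nat p)
                     * vp ((k - 2 * t) * g1 p + t * g2 p))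
                  (br a (b - (k - 2 * t) * g1 p - t * g2 p)))
              (sc (cst (of_int (dd (nat (k + 1)) t) * (-1) powi (k + t) * u1 p powi (k - 2 * t - 1))
                     * vp ((k - 2 * t - 1) * g1 p) * vp ((t + 1) * g2 p))
                  (br a (b - (k - 2 * t - 1) * g1 p - (t + 1) * g2 p))))
            {1 .. k div 2})
    (eadd (esum (\<lambda>t. sc (cst (cT p t * of_nat p powi (k - t - 1)) * vp (t * g1 p))
                        (AB p a (b - t * g1 p)))
            {0 .. k - 1})
    (eadd (esum (\<lambda>t. sc (cst (cP t * of_nat p powi (k - 2 * t - 1)) * vp (t * g2 p))
                        (AB p a (b - t * g2 p)))
            {1 .. (k - 1) div 2})
          (esum (\<lambda>r. esum (\<lambda>t. sc (cst (cRT p r t * of_nat p powi (k - 2 * r - t - 1))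
                                     * vp (r * g2 p + t * g1 p))
                                 (AB p a (b - r * g2 p - t * g1 p)))
                       {1 .. k - 1 - 2 * r})
            {1 .. (k - 2) div 2}))))))"
proof -
  have p1: "p \<ge> 2" using assms(1) prime_ge_2_nat by blast
  have L: "sc (cst (of_nat p ^ nat (k + 1))) (br a b) = Phi a b [:of_nat p ^ nat (k + 1):]"
    by (rule sc_br0)
  have R: "(eadd (sc (cst ((-1) powi k * u1 p powi k * of_nat p) * vp (k * g1 p)) (br a (b - k * g1 p)))
    (eadd (sc (cst ((-1) powi k * u1 p powi (k - 1)) * vp ((k - 1) * g1 p + g2 p))
              (br a (b - (k - 1) * g1 p - g2 p)))
    (eadd (esum (\<lambda>t. eadd
              (sc (cst (of_int (cc (nat (k + 1)) t) * (-1) powi (k + t) * u1 p powi (k - 2 * t) * of_nat p)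
                     * vp ((k - 2 * t) * g1 p + t * g2 p))
                  (br a (b - (k - 2 * t) * g1 p - t * g2 p)))
              (sc (cst (of_int (dd (nat (k + 1)) t) * (-1) powi (k + t) * u1 p powi (k - 2 * t - 1))
                     * vp ((k - 2 * t - 1) * g1 p) * vp ((t + 1) * g2 p))
                  (br a (b - (k - 2 * t - 1) * g1 p - (t + 1) * g2 p))))
            {1 .. k div 2})
    (eadd (esum (\<lambda>t. sc (cst (cT p t * of_nat p powi (k - t - 1)) * vp (t * g1 p))
                        (AB p a (b - t * g1 p)))
            {0 .. k - 1})
    (eadd (esum (\<lambda>t. sc (cst (cP t * of_nat p powi (k - 2 * t - 1)) * vp (t * g2 p))
                        (AB p a (b - t * g2 p)))
            {1 .. (k - 1) div 2})
          (esum (\<lambda>r. esum (\<lambda>t. sc (cst (cRT p r t * of_nat p powi (k - 2 * r - t - 1))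
                                     * vp (r * g2 p + t * g1 p))
                                 (AB p a (b - r * g2 p - t * g1 p)))
                       {1 .. k - 1 - 2 * r})
            {1 .. (k - 2) div 2})))))) = Phi a b ([:(-1) powi k * u1 p powi k * of_nat p:] * vp (k * g1 p) + ([:(-1) powi k * u1 p powi (k - 1):] * vp ((k - 1) * g1 p + g2 p) + ((\<Sum>t\<in>{1..k div 2}. [:of_int (cc (nat (k + 1)) t) * (-1) powi (k + t) * u1 p powi (k - 2 * t) * of_nat p:] * vp ((k - 2 * t) * g1 p + t * g2 p) + [:of_int (dd (nat (k + 1)) t) * (-1) powi (k + t) * u1 p powi (k - 2 * t - 1):] * vp ((k - 2 * t - 1) * g1 p) * vp ((t + 1) * g2 p)) + ((\<Sum>t\<in>{0..k - 1}. [:cT p t * of_nat p powi (k - t - 1):] * vp (t * g1 p) * Qp p) + ((\<Sum>t\<in>{1..(k - 1) div 2}. [:cP t * of_nat p powi (k - 2 * t - 1):] * vp (t * g2 p) * Qp p) + (\<Sum>r\<in>{1..(k - 2) div 2}. \<Sum>t\<in>{1..k - 1 - 2 * r}.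
        [:cRT p r t * of_nat p powi (k - 2 * r - t - 1):] * vp (r * g2 p + t * g1 p) * Qp p))))))"
    by (simp only: sc_br sc_brA sc_br2 sc_AB sc_ABA eadd_Phi esum_Phi)
  have BIG: "[:(-1) powi k * u1 p powi k * of_nat p:] * vp (k * g1 p) + ([:(-1) powi k * u1 p powi (k - 1):] * vp ((k - 1) * g1 p + g2 p) + ((\<Sum>t\<in>{1..k div 2}. [:of_int (cc (nat (k + 1)) t) * (-1) powi (k + t) * u1 p powi (k - 2 * t) * of_nat p:] * vp ((k - 2 * t) * g1 p + t * g2 p) + [:of_int (dd (nat (k + 1)) t) * (-1) powi (k + t) * u1 p powi (k - 2 * t - 1):] * vp ((k - 2 * t - 1) * g1 p) * vp ((t + 1) * g2 p)) + ((\<Sum>t\<in>{0..k - 1}. [:cT p t * of_nat p powi (k - t - 1):] * vp (t * g1 p) * Qp p) + ((\<Sum>t\<in>{1..(k - 1) div 2}. [:cP t * of_nat p powi (k - 2 * t - 1):] * vp (t * g2 p) * Qp p) + (\<Sum>r\<in>{1..(k - 2) div 2}. \<Sum>t\<in>{1..k - 1 - 2 * r}.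
        [:cRT p r t * of_nat p powi (k - 2 * r - t - 1):] * vp (r * g2 p + t * g1 p) * Qp p))))) = (([:(-1) powi k * u1 p powi k * of_nat p:] * vp (k * g1 p)) + (\<Sum>t\<in>{1..k div 2}. [:of_int (cc (nat (k + 1)) t) * (-1) powi (k + t) * u1 p powi (k - 2 * t) * of_nat p:] * vp ((k - 2 * t) * g1 p + t * g2 p))) + (([:(-1) powi k * u1 p powi (k - 1):] * vp ((k - 1) * g1 p + g2 p)) + (\<Sum>t\<in>{1..k div 2}. [:of_int (dd (nat (k + 1)) t) * (-1) powi (k + t) * u1 p powi (k - 2 * t - 1):] * vp ((k - 2 * t - 1) * g1 p) * vp ((t + 1) * g2 p))) + ((\<Sum>t\<in>{0..k - 1}. [:cT p t * of_nat p powi (k - t - 1):] * vp (t * g1 p) * Qp p) + ((\<Sum>t\<in>{1..(k - 1) div 2}. [:cP t * of_nat p powi (k - 2 * t - 1):] * vp (t * g2 p) * Qp p) + (\<Sum>r\<in>{1..(k - 2) div 2}. \<Sum>t\<in>{1..k - 1 - 2 * r}.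
        [:cRT p r t * of_nat p powi (k - 2 * r - t - 1):] * vp (r * g2 p + t * g1 p) * Qp p)))"
    by (simp only: sum.distrib add_ac)
  define P where "P = [:(of_nat p :: rat):]"
  define u where "u = [:u1 p:]"
  define x where "x = vp (g1 p)"
  define y where "y = vp (g2 p)"
  define w where "w = Qp p"
  define n where "n = nat k - 1"
  have kn: "int n + 1 = k" "n + 2 = nat (k + 1)" unfolding n_def using assms(2) by auto
  have B: "[:(-1) powi k * u1 p powi k * of_nat p:] * vp (k * g1 p) + ([:(-1) powi k * u1 p powi (k - 1):] * vp ((k - 1) * g1 p + g2 p) + ((\<Sum>t\<in>{1..k div 2}. [:of_int (cc (nat (k + 1)) t) * (-1) powi (k + t) * u1 p powi (k - 2 * t) * of_nat p:] * vp ((k - 2 * t) * g1 p + t * g2 p) + [:of_int (dd (nat (k + 1)) t) * (-1) powi (k + t) * u1 p powi (k - 2 * t - 1):] * vp ((k - 2 * t - 1) * g1 p) * vp ((t + 1) * g2 p)) + ((\<Sum>t\<in>{0..k - 1}. [:cT p t * of_nat p powi (k - t - 1):] * vp (t * g1 p) * Qp p) + ((\<Sum>t\<in>{1..(k - 1) div 2}. [:cP t * of_nat p powi (k - 2 * t - 1):] * vp (t * g2 p) * Qp p) + (\<Sum>r\<in>{1..(k - 2) div 2}. \<Sum>t\<in>{1..k - 1 - 2 * r}.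
        [:cRT p r t * of_nat p powi (k - 2 * r - t - 1):] * vp (r * g2 p + t * g1 p) * Qp p))))) = Gam u x y k * P + Del u x y k + Ssum P u x y w k"
    unfolding BIG unfolding B1[OF assms] B2[OF assms] B3[OF assms] P_def u_def x_def y_def w_def ..
  have Lp: "[:of_nat p ^ nat (k + 1):] = P ^ (n + 2)"
    unfolding P_def kn(2) by (simp add: poly_const_pow)
  have MI: "[:of_nat p ^ nat (k + 1):] - ([:(-1) powi k * u1 p powi k * of_nat p:] * vp (k * g1 p) + ([:(-1) powi k * u1 p powi (k - 1):] * vp ((k - 1) * g1 p + g2 p) + ((\<Sum>t\<in>{1..k div 2}. [:of_int (cc (nat (k + 1)) t) * (-1) powi (k + t) * u1 p powi (k - 2 * t) * of_nat p:] * vp ((k - 2 * t) * g1 p + t * g2 p) + [:of_int (dd (nat (k + 1)) t) * (-1) powi (k + t) * u1 p powi (k - 2 * t - 1):] * vp ((k - 2 * t - 1) * g1 p) * vp ((t + 1) * g2 p)) + ((\<Sum>t\<in>{0..k - 1}. [:cT p t * of_nat p powi (k - t - 1):] * vp (t * g1 p) * Qp p) + ((\<Sum>t\<in>{1..(k - 1) div 2}. [:cP t * of_nat p powi (k - 2 * t - 1):] * vp (t * g2 p) * Qp p) + (\<Sum>r\<in>{1..(k - 2) div 2}. \<Sum>t\<in>{1..k - 1 - 2 * r}.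
        [:cRT p r t * of_nat p powi (k - 2 * r - t - 1):] * vp (r * g2 p + t * g1 p) * Qp p)))))) = Mrec P u x y n * Rp p"
    unfolding Lp B Rp_split[OF assms(1)] using main_identity[of P n u x y w]
    unfolding kn(1) P_def u_def x_def y_def w_def by simp
  have ZG: "Zpoly (Gam u x y j)" for j
    unfolding Gam_def u_def x_def y_def
    using u1_int(1)[OF assms(1)]
    by (intro Zpoly_sum Zpoly_mult Zpoly_power Zpoly_of_int Zpoly_const Zpoly_vp) auto
  have ZP: "Zpoly P" unfolding P_def by (intro Zpoly_const) auto
  have ZM: "Zpoly (Mrec P u x y n)"
    unfolding Mrec_def by (intro Zpoly_add Zpoly_sum Zpoly_mult Zpoly_power ZP ZG)
  show ?thesis unfolding L R ku_eq_def Phi_diff MI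
    by (rule Phi_mult_R[OF assms(1) ZM])
qed


end
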